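(* The Lemke--Howson algorithm solves nondegenerate instances of the tropical Nash equilibrium complementarity problem (TNECP) within at most $2n-1$ iterations, where $n$ is the number of rows of the system.
   Context: Over the max-plus semifield $\mathbb{T}=\mathbb{R}\cup\{-\infty\}$ ($\oplus=\max$, $\odot=+$), TNECP asks, given an $n\times n$ matrix $M^-$ with no all-$(-\infty)$ column and $q^+\in\mathbb{T}^n$ with no $-\infty$ entry, for $(w,z)\in\mathbb{T}^n\times\mathbb{T}^n$ with $w\oplus M^-\odot z=q^+$, $w^\top\odot z=-\infty$, $z\neq-\infty$. The instance is nondegenerate if for each $j\in[n]$ the minimum $\min_k (q^+_k - M^-_{kj})$ is attained exactly once. Write the system as $A\odot x=b$ with $A=(I\ M^-)$ (tropical identity), columns indexed by $[n]\uplus[n]$ (blue copy for $w$, red copy for $z$; two elements are twins if same label, different colors). A tropical basis of $A\odot x=b$ ($A\in\mathbb{T}^{n\times d}$) is $B\subset[d]$ of size $n$ with a bijection $\phi:[n]\to B$ such that for each $i$, $b_i - A_{i\phi(i)}\in\mathbb{T}$ is minimal among $b_k-A_{k\phi(i)}$, $k\in[n]$. In the nondegenerate case, for a basis $B$ and $j\notin B$ there is a unique other basis contained in $B\cup\{j\}$. Fix $j^\star\in[n]$. The Lemke--Howson algorithm starts with $B=[n]\uplus\varnothing$ and entering element $\gamma=(j^\star,\text{red})$, and repeatedly: replaces $B$ by the unique basis $B'\subset B\cup\{\gamma\}$ distinct from $B$, sets $\gamma$ to the twin of the element of $B\setminus B'$, and stops when $B$ is fully labeled (all labels in $[n]$ appear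 in $B$). *)

theory Defs
  imports "HOL-Library.Extended_Real"
begin

text \<open>Tropical numbers T = R with -infinity are modelled by ereal values different from +infinity.  The ground set [n] disjoint-union [n] is modelled
by the sum type nat + nat: Inl i is the blue copy of i (variable w_i), Inr i is the red copy
(variable z_i).\<close>

definition elems :: "nat \<Rightarrow> (nat + nat) set" where
  "elems n = Inl ` {..<n} \<union> Inr ` {..<n}"

definition label :: "nat + nat \<Rightarrow> nat" where
  "label e = (case e of Inl i \<Rightarrow> i | Inr i \<Rightarrow> i)"

definition twin :: "nat + nat \<Rightarrow> nat + nat" where
  "twin e = (case e of Inl i \<Rightarrow> Inr i | Inr i \<Rightarrow> Inl i)"

text \<open>Column e of A = (I  M), I the tropical identity (0 on diagonal, -infinity elsewhere).\<close>
definition colA :: "(nat \<Rightarrow> nat \<Rightarrow> ereal) \<Rightarrow> nat \<Rightarrow> nat + nat \<Rightarrow> ereal" where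
  "colA M k e = (case e of Inl j \<Rightarrow> (if k = j then 0 else -\<infinity>) | Inr j \<Rightarrow> M k j)"

definition trop_basis :: "nat \<Rightarrow> (nat \<Rightarrow> nat \<Rightarrow> ereal) \<Rightarrow> (nat \<Rightarrow> real) \<Rightarrow> (nat + nat) set \<Rightarrow> bool" where
  "trop_basis n M q B \<longleftrightarrow> B \<subseteq> elems n \<and> card B = n \<and>
     (\<exists>\<phi>. bij_betw \<phi> {..<n} B \<and>
        (\<forall>i<n. ereal (q i) - colA M i (\<phi> i) \<noteq> \<infinity> \<and>
               (\<forall>k<n. ereal (q i) - colA M i (\<phi> i) \<le> ereal (q k) - colA M k (\<phi> i))))"

definition nondegenerate :: "nat \<Rightarrow> (nat \<Rightarrow> nat \<Rightarrow> ereal) \<Rightarrow> (nat \<Rightarrow> real) \<Rightarrow> bool" where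
  "nondegenerate n M q \<longleftrightarrow>
     (\<forall>j<n. \<exists>!k. k < n \<and> (\<forall>k'<n. ereal (q k) - M k j \<le> ereal (q k') - M k' j))"

definition fully_labeled :: "nat \<Rightarrow> (nat + nat) set \<Rightarrow> bool" where
  "fully_labeled n B \<longleftrightarrow> (\<forall>i<n. i \<in> label ` B)"

definition LH_step :: "nat \<Rightarrow> (nat \<Rightarrow> nat \<Rightarrow> ereal) \<Rightarrow> (nat \<Rightarrow> real)
    \<Rightarrow> (nat + nat) set \<times> (nat + nat) \<Rightarrow> (nat + nat) set \<times> (nat + nat)" where
  "LH_step n M q S =
     (let B = fst S; \<gamma> = snd S;
          B' = (THE B'. trop_basis n M q B' \<and> B' \<subseteq> insert \<gamma> B \<and> B' \<noteq> B)
      in (B', twin (THE e. e \<in> B - B')))"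

definition LH_state :: "nat \<Rightarrow> (nat \<Rightarrow> nat \<Rightarrow> ereal) \<Rightarrow> (nat \<Rightarrow> real) \<Rightarrow> nat \<Rightarrow> nat
    \<Rightarrow> (nat + nat) set \<times> (nat + nat)" where
  "LH_state n M q jstar k = (LH_step n M q ^^ k) (Inl ` {..<n}, Inr jstar)"

definition basic_point :: "nat \<Rightarrow> (nat \<Rightarrow> nat \<Rightarrow> ereal) \<Rightarrow> (nat \<Rightarrow> real) \<Rightarrow> (nat + nat) set
    \<Rightarrow> nat + nat \<Rightarrow> ereal" where
  "basic_point n M q B e =
     (if e \<in> B then Min {ereal (q k) - colA M k e | k. k < n} else -\<infinity>)"

definition TNECP_sol :: "nat \<Rightarrow> (nat \<Rightarrow> nat \<Rightarrow> ereal) \<Rightarrow> (nat \<Rightarrow> real)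
    \<Rightarrow> (nat \<Rightarrow> ereal) \<Rightarrow> (nat \<Rightarrow> ereal) \<Rightarrow> bool" where
  "TNECP_sol n M q w z \<longleftrightarrow>
     (\<forall>i<n. w i \<noteq> \<infinity> \<and> z i \<noteq> \<infinity>) \<and>
     (\<forall>i<n. max (w i) (Max {M i j + z j | j. j < n}) = ereal (q i)) \<and>
     Max {w i + z i | i. i < n} = -\<infinity> \<and>
     (\<exists>j<n. z j \<noteq> -\<infinity>)"

end

theory Submission
  imports Defs
begin


locale LH =
  fixes n :: nat and M :: "nat \<Rightarrow> nat \<Rightarrow> ereal" and q :: "nat \<Rightarrow> real" and jstar :: nat
  assumes M_trop: "\<forall>i<n. \<forall>j<n. M i j \<noteq> \<infinity>"
    and M_col: "\<forall>j<n. \<exists>k<n. M k j \<noteq> -\<infinity>"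
    and nondeg: "nondegenerate n M q"
    and jstar: "jstar < n"
begin

definition r :: "nat \<Rightarrow> nat" where
  "r j = (THE k. k < n \<and> (\<forall>k'<n. ereal (q k) - M k j \<le> ereal (q k') - M k' j))"

lemma r_prop: assumes "j < n"
  shows "r j < n \<and> (\<forall>k'<n. ereal (q (r j)) - M (r j) j \<le> ereal (q k') - M k' j)"
proof -
  have "\<exists>!k. k < n \<and> (\<forall>k'<n. ereal (q k) - M k j \<le> ereal (q k') - M k' j)"
    using nondeg assms unfolding nondegenerate_def by blast
  then show ?thesis unfolding r_def by (rule theI')
qed

lemma r_unique: assumes "j < n" "k < n" "\<forall>k'<n. ereal (q k) - M k j \<le> ereal (q k') - M k' j"
  shows "k = r j"
proof -
  have "\<exists>!k. k < n \<and> (\<forall>k'<n. ereal (q k) - M k j \<le> ereal (q k') - M k' j)"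
    using nondeg assms unfolding nondegenerate_def by blast
  then show ?thesis unfolding r_def using assms by (simp add: the1_equality)
qed

lemma r_fin: assumes "j < n" shows "M (r j) j \<noteq> -\<infinity>" "M (r j) j \<noteq> \<infinity>"
proof -
  obtain k where k: "k < n" "M k j \<noteq> -\<infinity>" using M_col assms by blast
  have "M k j \<noteq> \<infinity>" using M_trop k assms by blast
  then have "ereal (q k) - M k j \<noteq> \<infinity>" using k by (cases "M k j") auto
  moreover have "ereal (q (r j)) - M (r j) j \<le> ereal (q k) - M k j" using r_prop assms k by blast
  ultimately show "M (r j) j \<noteq> -\<infinity>" by auto
  show "M (r j) j \<noteq> \<infinity>" using M_trop r_prop assms by blast
qed

definition cov :: "nat + nat \<Rightarrow> nat" where
  "cov e = (case e of Inl i \<Rightarrow> i | Inr j \<Rightarrow> r j)"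

lemma cov_lt: "e \<in> elems n \<Longrightarrow> cov e < n"
  by (auto simp: elems_def cov_def r_prop)

lemma finite_elems: "finite (elems n)" by (simp add: elems_def)

lemma basis_iff: assumes "B \<subseteq> elems n"
  shows "trop_basis n M q B \<longleftrightarrow> card B = n \<and> inj_on cov B"
proof
  assume "trop_basis n M q B"
  then obtain \<phi> where bij: "bij_betw \<phi> {..<n} B" and cB: "card B = n" and
    H: "\<forall>i<n. ereal (q i) - colA M i (\<phi> i) \<noteq> \<infinity> \<and>
               (\<forall>k<n. ereal (q i) - colA M i (\<phi> i) \<le> ereal (q k) - colA M k (\<phi> i))"
    unfolding trop_basis_def by (elim conjE exE) fast
  have cp: "cov (\<phi> i) = i" if i: "i < n" for i
  proof -
    have "\<phi> i \<in> elems n" using bij i assms bij_betwE by blast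
    then show ?thesis
    proof (cases "\<phi> i")
      case (Inl j)
      have "ereal (q i) - colA M i (\<phi> i) \<noteq> \<infinity>" using H i by blast
      then have "i = j" using Inl by (auto simp: colA_def split: if_splits)
      then show ?thesis using Inl by (simp add: cov_def)
    next
      case (Inr j)
      with \<open>\<phi> i \<in> elems n\<close> have "j < n" by (auto simp: elems_def)
      have "\<forall>k<n. ereal (q i) - colA M i (\<phi> i) \<le> ereal (q k) - colA M k (\<phi> i)" using H i by blast
      hence "\<forall>k<n. ereal (q i) - M i j \<le> ereal (q k) - M k j" by (simp add: Inr colA_def)
      then show ?thesis using i Inr r_unique[of j i] \<open>j < n\<close> by (simp add: cov_def)
    qed
  qed
  have "inj_on cov B"
  proof (rule inj_onI)
    fix x y assume "x \<in> B" "y \<in> B" "cov x = cov y"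
    moreover have "\<phi> ` {..<n} = B" using bij by (simp add: bij_betw_def)
    ultimately obtain a b where "a < n" "b < n" "x = \<phi> a" "y = \<phi> b"
      by (metis imageE lessThan_iff)
    then show "x = y" using cp \<open>cov x = cov y\<close> by metis
  qed
  then show "card B = n \<and> inj_on cov B" using cB by blast
next
  assume A: "card B = n \<and> inj_on cov B"
  have sub: "cov ` B \<subseteq> {..<n}" using assms cov_lt by blast
  have fin: "finite B" using assms finite_elems finite_subset by blast
  have "card (cov ` B) = n" using A card_image by blast
  then have img: "cov ` B = {..<n}" using sub by (simp add: card_subset_eq)
  then have bc: "bij_betw cov B {..<n}" using A by (simp add: bij_betw_def)
  define \<phi> where "\<phi> = the_inv_into B cov"
  have bij: "bij_betw \<phi> {..<n} B" unfolding \<phi>_def using bc by (rule bij_betw_the_inv_into)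
  have cp: "cov (\<phi> i) = i" if "i < n" for i
    unfolding \<phi>_def using A img that by (simp add: f_the_inv_into_f)
  have "ereal (q i) - colA M i (\<phi> i) \<noteq> \<infinity> \<and>
               (\<forall>k<n. ereal (q i) - colA M i (\<phi> i) \<le> ereal (q k) - colA M k (\<phi> i))" if i: "i < n" for i
  proof -
    have "\<phi> i \<in> elems n" using bij i assms bij_betwE by blast
    then show ?thesis
    proof (cases "\<phi> i")
      case (Inl j)
      have "j = i" using cp[OF i] Inl by (simp add: cov_def)
      then show ?thesis using Inl by (simp add: colA_def)
    next
      case (Inr j)
      with \<open>\<phi> i \<in> elems n\<close> have j: "j < n" by (auto simp: elems_def)
      have "r j = i" using cp[OF i] Inr by (simp add: cov_def)
      have "ereal (q i) - M i j \<noteq> \<infinity>" using r_fin[OF j] \<open>r j = i\<close> by (cases "M i j") auto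
      then show ?thesis using r_prop[OF j] \<open>r j = i\<close> Inr by (simp add: colA_def)
    qed
  qed
  note H' = this
  show "trop_basis n M q B" unfolding trop_basis_def
    apply (rule conjI[OF assms], rule conjI[OF A[THEN conjunct1]])
    apply (rule exI[of _ \<phi>])
    using bij H' by blast
qed


definition BR :: "nat set \<Rightarrow> (nat + nat) set" where
  "BR R = Inl ` ({..<n} - r ` R) \<union> Inr ` R"

lemma BR_elems: "R \<subseteq> {..<n} \<Longrightarrow> BR R \<subseteq> elems n"
  by (auto simp: BR_def elems_def)

lemma BR_basis: assumes "R \<subseteq> {..<n}" "inj_on r R" shows "trop_basis n M q (BR R)"
proof -
  have rR: "r ` R \<subseteq> {..<n}" using assms r_prop by auto
  have fR: "finite R" using assms finite_subset by blast
  have c1: "card (BR R) = card (Inl ` ({..<n} - r ` R) :: (nat + nat) set) + card (Inr ` R :: (nat + nat) set)"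
    unfolding BR_def using fR by (subst card_Un_disjoint) auto
  have c2: "card (Inl ` ({..<n} - r ` R) :: (nat + nat) set) = card ({..<n} - r ` R)"
    by (rule card_image) simp
  have c3: "card (Inr ` R :: (nat + nat) set) = card R"
    by (rule card_image) simp
  have c4: "card ({..<n} - r`R) = n - card R"
    using rR card_Diff_subset[of "r ` R" "{..<n}"] card_image[OF assms(2)] fR by simp
  have c5: "card R \<le> n" using card_mono[OF _ assms(1)] by simp
  have c: "card (BR R) = n" using c1 c2 c3 c4 c5 by simp
  have "inj_on cov (BR R)"
  proof (rule inj_onI)
    fix x y assume "x \<in> BR R" "y \<in> BR R" "cov x = cov y"
    then show "x = y" using inj_onD[OF assms(2)] by (auto simp: BR_def cov_def)
  qed
  then show ?thesis using basis_iff[OF BR_elems[OF assms(1)]] c by simp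
qed

lemma basis_facts: assumes "trop_basis n M q B"
  shows "B \<subseteq> elems n" "card B = n" "inj_on cov B" "finite B" "cov ` B = {..<n}"
proof -
  show B: "B \<subseteq> elems n" using assms unfolding trop_basis_def by (elim conjE)
  then show c: "card B = n" "inj_on cov B" using assms basis_iff[OF B] by simp_all
  show f: "finite B" using B finite_elems finite_subset by blast
  have sub: "cov ` B \<subseteq> {..<n}" using B cov_lt by blast
  have "card (cov ` B) = n" using c card_image by metis
  then show "cov ` B = {..<n}" using sub by (simp add: card_subset_eq)
qed

lemma pivot: assumes T: "trop_basis n M q B" and g: "\<gamma> \<in> elems n" "\<gamma> \<notin> B"
  and e: "e \<in> B" "cov e = cov \<gamma>"
  shows "(trop_basis n M q B' \<and> B' \<subseteq> insert \<gamma> B \<and> B' \<noteq> B) \<longleftrightarrow> B' = insert \<gamma> (B - {e})"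
proof -
  note bf = basis_facts[OF T]
  let ?C = "insert \<gamma> (B - {e})"
  have Cs: "?C \<subseteq> elems n" using bf g by blast
  have fC: "finite ?C" using bf by simp
  have "n > 0" using bf e card_gt_0_iff by force
  then have cC: "card ?C = n" using bf e g by (simp add: card_Suc_Diff1)
  have "cov \<gamma> \<notin> cov ` (B - {e})"
  proof
    assume "cov \<gamma> \<in> cov ` (B - {e})"
    then obtain x where x: "x \<in> B - {e}" "cov \<gamma> = cov x" by blast
    then have "cov x = cov e" using e by simp
    from inj_onD[OF bf(3) this] x e show False by blast
  qed
  then have "inj_on cov ?C" using inj_on_diff[OF bf(3)] by (subst inj_on_insert) blast
  then have CT: "trop_basis n M q ?C" using basis_iff Cs cC by blast
  show ?thesis
  proof
    assume A: "trop_basis n M q B' \<and> B' \<subseteq> insert \<gamma> B \<and> B' \<noteq> B"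
    note bf' = basis_facts[OF A[THEN conjunct1]]
    have "\<gamma> \<in> B'"
    proof (rule ccontr)
      assume "\<gamma> \<notin> B'"
      then have "B' \<subseteq> B" using A by blast
      then have "B' = B" using card_subset_eq[OF bf(4) \<open>B' \<subseteq> B\<close>] bf(2) bf'(2) by simp
      then show False using A by blast
    qed
    moreover have "e \<notin> B'"
    proof
      assume "e \<in> B'"
      then have "e = \<gamma>" using inj_onD[OF bf'(3) e(2) \<open>e \<in> B'\<close> \<open>\<gamma> \<in> B'\<close>] by blast
      then show False using e g by blast
    qed
    ultimately have "B' \<subseteq> ?C" using A by blast
    then show "B' = ?C" using card_subset_eq[OF fC \<open>B' \<subseteq> ?C\<close>] cC bf'(2) by simp
  next
    assume "B' = ?C"
    then show "trop_basis n M q B' \<and> B' \<subseteq> insert \<gamma> B \<and> B' \<noteq> B" using CT g by blast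
  qed
qed

lemma LH_step_eq: assumes T: "trop_basis n M q B" and g: "\<gamma> \<in> elems n" "\<gamma> \<notin> B"
  and e: "e \<in> B" "cov e = cov \<gamma>"
  shows "LH_step n M q (B, \<gamma>) = (insert \<gamma> (B - {e}), twin e)"
proof -
  have th: "(THE B'. trop_basis n M q B' \<and> B' \<subseteq> insert \<gamma> B \<and> B' \<noteq> B) = insert \<gamma> (B - {e})"
    apply (rule the_equality)
     apply (subst pivot[OF assms], rule refl)
    apply (subst (asm) pivot[OF assms], assumption)
    done
  have d: "B - insert \<gamma> (B - {e}) = {e}" using e g by blast
  show ?thesis unfolding LH_step_def Let_def fst_conv snd_conv th d by simp
qed

lemma unique_other: assumes T: "trop_basis n M q B" and g: "\<gamma> \<in> elems n" "\<gamma> \<notin> B"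
  shows "\<exists>!B'. trop_basis n M q B' \<and> B' \<subseteq> insert \<gamma> B \<and> B' \<noteq> B"
proof -
  have "cov \<gamma> \<in> cov ` B" using basis_facts(5)[OF T] cov_lt[OF g(1)] by simp
  then obtain e where e: "e \<in> B" "cov e = cov \<gamma>" by auto
  show ?thesis
    apply (rule ex1I[of _ "insert \<gamma> (B - {e})"])
     apply (subst pivot[OF T g e], rule refl)
    apply (subst (asm) pivot[OF T g e], assumption)
    done
qed

lemma step_F: assumes "R \<subseteq> {..<n}" "inj_on r R" "j < n" "j \<notin> R" "r j \<notin> r ` R"
  shows "LH_step n M q (BR R, Inr j) = (BR (insert j R), Inr (r j))"
proof -
  have "LH_step n M q (BR R, Inr j) = (insert (Inr j) (BR R - {Inl (r j)}), twin (Inl (r j)))"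
    apply (rule LH_step_eq[OF BR_basis[OF assms(1,2)]])
    using assms r_prop[OF assms(3)] by (auto simp: elems_def BR_def cov_def)
  also have "insert (Inr j) (BR R - {Inl (r j)}) = BR (insert j R)"
    by (auto simp: BR_def)
  finally show ?thesis by (simp add: twin_def)
qed

lemma step_S: assumes "R \<subseteq> {..<n}" "inj_on r R" "j < n" "j \<notin> R" "j' \<in> R" "r j = r j'"
  shows "LH_step n M q (BR R, Inr j) = (BR (insert j (R - {j'})), Inl j')"
proof -
  have "LH_step n M q (BR R, Inr j) = (insert (Inr j) (BR R - {Inr j'}), twin (Inr j'))"
    apply (rule LH_step_eq[OF BR_basis[OF assms(1,2)]])
    using assms by (auto simp: elems_def BR_def cov_def)
  also have "r ` insert j (R - {j'}) = r ` R"
  proof -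
    have "r ` insert j (R - {j'}) = insert (r j') (r ` (R - {j'}))" using assms(6) by (simp only: image_insert)
    also have "\<dots> = r ` (insert j' (R - {j'}))" by (simp only: image_insert)
    also have "insert j' (R - {j'}) = R" using assms by blast
    finally show ?thesis .
  qed
  then have "insert (Inr j) (BR R - {Inr j'}) = BR (insert j (R - {j'}))"
    unfolding BR_def using assms by auto
  finally show ?thesis by (simp add: twin_def)
qed

lemma step_Bk: assumes "R \<subseteq> {..<n}" "inj_on r R" "j' \<in> R"
  shows "LH_step n M q (BR R, Inl (r j')) = (BR (R - {j'}), Inl j')"
proof -
  have j': "j' < n" using assms by blast
  have "LH_step n M q (BR R, Inl (r j')) = (insert (Inl (r j')) (BR R - {Inr j'}), twin (Inr j'))"
    apply (rule LH_step_eq[OF BR_basis[OF assms(1,2)]])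
    using assms r_prop[OF j'] by (auto simp: elems_def BR_def cov_def)
  also have "r ` (R - {j'}) = r ` R - {r j'}" using assms inj_on_image_set_diff[of r R R "{j'}"] by auto
  then have "insert (Inl (r j')) (BR R - {Inr j'}) = BR (R - {j'})"
    unfolding BR_def using assms r_prop[OF j'] by auto
  finally show ?thesis by (simp add: twin_def)
qed

lemma fully_BR: assumes "R \<subseteq> {..<n}" shows "fully_labeled n (BR R) \<longleftrightarrow> r ` R \<subseteq> R"
proof -
  have "label ` BR R = ({..<n} - r ` R) \<union> R" by (force simp: BR_def label_def)
  moreover have "r ` R \<subseteq> {..<n}" using assms r_prop by auto
  ultimately show ?thesis unfolding fully_labeled_def by auto
qed

end



lemma setc: "{f k | k. k < (n::nat)} = f ` {..<n}" by auto

context LH begin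

lemma bp_Inl: assumes "R \<subseteq> {..<n}" "i < n"
  shows "basic_point n M q (BR R) (Inl i) = (if i \<in> r ` R then -\<infinity> else ereal (q i))"
proof (cases "i \<in> r ` R")
  case True
  then have "Inl i \<notin> BR R" by (auto simp: BR_def)
  then show ?thesis using True by (simp add: basic_point_def)
next
  case False
  then have "Inl i \<in> BR R" using assms by (simp add: BR_def)
  moreover have "Min ((\<lambda>k. ereal (q k) - colA M k (Inl i)) ` {..<n}) = ereal (q i)"
  proof (rule Min_eqI)
    show "ereal (q i) \<in> (\<lambda>k. ereal (q k) - colA M k (Inl i)) ` {..<n}"
      using assms by (force simp: colA_def)
    fix y assume "y \<in> (\<lambda>k. ereal (q k) - colA M k (Inl i)) ` {..<n}"
    then show "ereal (q i) \<le> y" by (auto simp: colA_def)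
  qed simp
  ultimately show ?thesis using False by (simp add: basic_point_def setc)
qed

lemma bp_Inr: assumes "j < n"
  shows "basic_point n M q (BR R) (Inr j) = (if j \<in> R then ereal (q (r j)) - M (r j) j else -\<infinity>)"
proof (cases "j \<in> R")
  case False
  then have "Inr j \<notin> BR R" by (auto simp: BR_def)
  then show ?thesis using False by (simp add: basic_point_def)
next
  case True
  then have "Inr j \<in> BR R" by (simp add: BR_def)
  moreover have "Min ((\<lambda>k. ereal (q k) - colA M k (Inr j)) ` {..<n}) = ereal (q (r j)) - M (r j) j"
  proof (rule Min_eqI)
    show "ereal (q (r j)) - M (r j) j \<in> (\<lambda>k. ereal (q k) - colA M k (Inr j)) ` {..<n}"
      using r_prop[OF assms] by (force simp: colA_def)
    fix y assume "y \<in> (\<lambda>k. ereal (q k) - colA M k (Inr j)) ` {..<n}"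
    then show "ereal (q (r j)) - M (r j) j \<le> y" using r_prop[OF assms] by (auto simp: colA_def)
  qed simp
  ultimately show ?thesis using True by (simp add: basic_point_def setc)
qed

lemma zv_real: assumes "j < n" obtains c where "ereal (q (r j)) - M (r j) j = ereal c"
  using r_fin[OF assms] by (cases "M (r j) j") auto

lemma zv_le: assumes "j < n" "i < n" shows "M i j + (ereal (q (r j)) - M (r j) j) \<le> ereal (q i)"
proof -
  obtain c where c: "ereal (q (r j)) - M (r j) j = ereal c" using zv_real[OF assms(1)] by blast
  have le: "ereal c \<le> ereal (q i) - M i j" using r_prop[OF assms(1)] assms c by metis
  have "M i j \<noteq> \<infinity>" using M_trop assms by blast
  then show ?thesis using le c by (cases "M i j") auto
qed

lemma zv_eq: assumes "j < n" shows "M (r j) j + (ereal (q (r j)) - M (r j) j) = ereal (q (r j))"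
  using r_fin[OF assms] by (cases "M (r j) j") auto

lemma TNECP_BR: assumes R: "R \<subseteq> {..<n}" and rR: "r ` R = R" and ne: "R \<noteq> {}"
  shows "TNECP_sol n M q (\<lambda>i. basic_point n M q (BR R) (Inl i)) (\<lambda>i. basic_point n M q (BR R) (Inr i))"
proof -
  have n0: "0 < n" using jstar by simp
  let ?w = "\<lambda>i. basic_point n M q (BR R) (Inl i)"
  let ?z = "\<lambda>i. basic_point n M q (BR R) (Inr i)"
  have w: "?w i = (if i \<in> R then -\<infinity> else ereal (q i))" if "i < n" for i
    using bp_Inl[OF R that] rR by simp
  have z: "?z j = (if j \<in> R then ereal (q (r j)) - M (r j) j else -\<infinity>)" if "j < n" for j
    using bp_Inr[OF that] by simp
  have c1: "\<forall>i<n. ?w i \<noteq> \<infinity> \<and> ?z i \<noteq> \<infinity>"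
  proof (intro allI impI conjI)
    fix i assume i: "i < n"
    show "?w i \<noteq> \<infinity>" using w[OF i] by simp
    obtain c where "ereal (q (r i)) - M (r i) i = ereal c" using zv_real[OF i] by blast
    then show "?z i \<noteq> \<infinity>" using z[OF i] by simp
  qed
  have c2: "\<forall>i<n. max (?w i) (Max {M i j + ?z j | j. j < n}) = ereal (q i)"
  proof (intro allI impI)
    fix i assume i: "i < n"
    have le: "M i j + ?z j \<le> ereal (q i)" if j: "j < n" for j
    proof -
      have "M i j \<noteq> \<infinity>" using M_trop i j by blast
      then show ?thesis using z[OF j] zv_le[OF j i] by (cases "M i j") auto
    qed
    have Mle: "Max {M i j + ?z j | j. j < n} \<le> ereal (q i)"
      unfolding setc using le n0 by (subst Max_le_iff) auto
    show "max (?w i) (Max {M i j + ?z j | j. j < n}) = ereal (q i)"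
    proof (cases "i \<in> R")
      case True
      then have "i \<in> r ` R" using rR by simp
      then obtain j where j: "j \<in> R" "r j = i" by auto
      have jn: "j < n" using j R by blast
      have "M i j + ?z j = ereal (q i)" using z[OF jn] j zv_eq[OF jn] by simp
      then have "Max {M i j + ?z j | j. j < n} = ereal (q i)"
        using Mle jn unfolding setc by (metis (no_types, lifting) Max_ge antisym finite_imageI finite_lessThan imageI lessThan_iff)
      then show ?thesis using w[OF i] True by simp
    next
      case False
      then show ?thesis using w[OF i] Mle by simp
    qed
  qed
  have c3: "Max {?w i + ?z i | i. i < n} = -\<infinity>"
  proof -
    have "?w i + ?z i = -\<infinity>" if i: "i < n" for i
    proof (cases "i \<in> R")
      case True
      obtain c where "ereal (q (r i)) - M (r i) i = ereal c" using zv_real[OF i] by blast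
      then show ?thesis using True w[OF i] z[OF i] by simp
    next
      case False
      then show ?thesis using w[OF i] z[OF i] by simp
    qed
    then have "(\<lambda>i. ?w i + ?z i) ` {..<n} = {-\<infinity>}" using n0 by force
    then show ?thesis unfolding setc by simp
  qed
  have c4: "\<exists>j<n. ?z j \<noteq> -\<infinity>"
  proof -
    obtain j where j: "j \<in> R" using ne by blast
    then have jn: "j < n" using R by blast
    obtain c where "ereal (q (r j)) - M (r j) j = ereal c" using zv_real[OF jn] by blast
    then show ?thesis using z[OF jn] j jn by auto
  qed
  show ?thesis unfolding TNECP_sol_def using c1 c2 c3 c4 by blast
qed

end



context LH begin

definition sq :: "nat \<Rightarrow> nat" where "sq s = (r ^^ s) jstar"

lemma sq_0: "sq 0 = jstar" by (simp add: sq_def)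
lemma sq_Suc: "sq (Suc s) = r (sq s)" by (simp add: sq_def)
lemma sq_lt: "sq s < n"
  by (induction s) (simp_all add: sq_0 sq_Suc jstar r_prop)

lemma sq_img: "sq ` A \<subseteq> {..<n}" using sq_lt by blast

lemma LH_state_Suc: "LH_state n M q jstar (Suc k) = LH_step n M q (LH_state n M q jstar k)"
  by (simp add: LH_state_def)

lemma LH_state_0: "LH_state n M q jstar 0 = (BR {}, Inr (sq 0))"
  by (simp add: LH_state_def BR_def sq_0)

lemma good_state: assumes "R \<subseteq> {..<n}" "inj_on r R" "\<gamma> \<in> elems n" "\<gamma> \<notin> BR R"
  shows "\<gamma> \<notin> BR R \<and> (\<exists>!B'. trop_basis n M q B' \<and> B' \<subseteq> insert \<gamma> (BR R) \<and> B' \<noteq> BR R)"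
  using unique_other[OF BR_basis[OF assms(1,2)] assms(3,4)] assms(4) by blast

lemma cycle_exists: "\<exists>m t. m < n \<and> t \<le> m \<and> inj_on sq {..m} \<and> sq (Suc m) = sq t"
proof -
  have "\<not> inj_on sq {..n}"
  proof
    assume "inj_on sq {..n}"
    then have "card (sq ` {..n}) = Suc n" by (simp add: card_image)
    moreover have "card (sq ` {..n}) \<le> n" using card_mono[OF _ sq_img] by fastforce
    ultimately show False by simp
  qed
  then obtain a b where ab: "a \<le> n" "b \<le> n" "a \<noteq> b" "sq a = sq b" unfolding inj_on_def by auto
  then obtain a b where ab: "a < b" "b \<le> n" "sq a = sq b"
    by (metis linorder_neqE_nat order.strict_trans1 order_less_imp_le)
  define P where "P m \<longleftrightarrow> (\<exists>t\<le>m. sq (Suc m) = sq t)" for m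
  have Pb: "P (b - 1)" unfolding P_def using ab by (intro exI[of _ a]) auto
  define m where "m = (LEAST m. P m)"
  have Pm: "P m" unfolding m_def using Pb by (rule LeastI)
  have mle: "m \<le> b - 1" unfolding m_def using Pb by (rule Least_le)
  have inj: "inj_on sq {..m}"
  proof (rule ccontr)
    assume "\<not> inj_on sq {..m}"
    then obtain a' b' where "a' \<le> m" "b' \<le> m" "a' \<noteq> b'" "sq a' = sq b'" unfolding inj_on_def by auto
    then obtain a' b' where ab': "a' < b'" "b' \<le> m" "sq a' = sq b'"
      by (metis linorder_neqE_nat order.strict_trans1 order_less_imp_le)
    have "P (b' - 1)" unfolding P_def using ab' by (intro exI[of _ a']) auto
    then have "m \<le> b' - 1" unfolding m_def by (rule Least_le)
    then show False using ab' by simp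
  qed
  obtain t where "t \<le> m" "sq (Suc m) = sq t" using Pm P_def by blast
  moreover have "m < n" using mle ab by simp
  ultimately show ?thesis using inj by blast
qed

end

locale LH2 = LH +
  fixes m t :: nat
  assumes inj: "inj_on sq {..m}" and tm: "t \<le> m" and cyc: "sq (Suc m) = sq t" and mn: "m < n"
begin

definition nx :: "nat \<Rightarrow> nat" where "nx a = (if a = m then t else Suc a)"

lemma r_sq: "a \<le> m \<Longrightarrow> r (sq a) = sq (nx a)"
  using cyc by (auto simp: nx_def sq_Suc[symmetric])

lemma r_img: "A \<subseteq> {..m} \<Longrightarrow> r ` sq ` A = sq ` nx ` A"
  using r_sq by (auto simp: image_image intro!: image_cong)

lemma nx_le: "a \<le> m \<Longrightarrow> nx a \<le> m"
  using tm by (auto simp: nx_def)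

lemma inj_r_sq: assumes "A \<subseteq> {..m}" "inj_on nx A" shows "inj_on r (sq ` A)"
proof (rule inj_onI)
  fix x y assume "x \<in> sq ` A" "y \<in> sq ` A" "r x = r y"
  then obtain a b where ab: "a \<in> A" "b \<in> A" "x = sq a" "y = sq b" by blast
  have "a \<le> m" "b \<le> m" using ab assms(1) by auto
  then have "sq (nx a) = sq (nx b)" using \<open>r x = r y\<close> r_sq ab by metis
  then have "nx a = nx b" using inj_onD[OF inj] nx_le ab assms(1) by blast
  then have "a = b" using inj_onD[OF assms(2)] ab by blast
  then show "x = y" using ab by simp
qed

lemma sq_in: "a \<le> m \<Longrightarrow> A \<subseteq> {..m} \<Longrightarrow> sq a \<in> sq ` A \<longleftrightarrow> a \<in> A"
  using inj_onD[OF inj] by blast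

lemma sq_diff: "A \<subseteq> {..m} \<Longrightarrow> x \<le> m \<Longrightarrow> sq ` A - {sq x} = sq ` (A - {x})"
  using inj_onD[OF inj] by blast

lemma fwd: "s \<le> m \<Longrightarrow> LH_state n M q jstar s = (BR (sq ` {..<s}), Inr (sq s))"
proof (induction s)
  case 0
  then show ?case using LH_state_0 by simp
next
  case (Suc s)
  then have sm: "s < m" by simp
  have IH: "LH_state n M q jstar s = (BR (sq ` {..<s}), Inr (sq s))" using Suc by simp
  have inx: "inj_on nx {..<s}" using sm by (auto simp: inj_on_def nx_def)
  have "r (sq s) \<notin> r ` sq ` {..<s}"
  proof -
    have "r ` sq ` {..<s} = sq ` nx ` {..<s}" using sm by (intro r_img) auto
    also have "nx ` {..<s} = Suc ` {..<s}" using sm by (auto simp: nx_def)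
    finally have e: "r ` sq ` {..<s} = sq ` Suc ` {..<s}" .
    have "Suc ` {..<s} \<subseteq> {..m}" using sm by auto
    then have "sq (Suc s) \<notin> sq ` Suc ` {..<s}" using sq_in[of "Suc s" "Suc ` {..<s}"] sm by auto
    then show ?thesis using e sq_Suc by simp
  qed
  then have "LH_step n M q (BR (sq ` {..<s}), Inr (sq s)) = (BR (insert (sq s) (sq ` {..<s})), Inr (r (sq s)))"
    using sm sq_in[of s "{..<s}"] by (intro step_F sq_img inj_r_sq inx sq_lt) auto
  then show ?case using IH by (simp add: LH_state_Suc lessThan_Suc sq_Suc)
qed

end



context LH2 begin

lemma inl_BR: "Inl i \<in> BR R \<longleftrightarrow> i < n \<and> i \<notin> r ` R" by (auto simp: BR_def)
lemma inr_BR: "Inr j \<in> BR R \<longleftrightarrow> j \<in> R" by (auto simp: BR_def)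

lemma sq_notin_lt: assumes "s \<le> m" shows "sq s \<notin> sq ` {..<s}"
proof -
  have "{..<s} \<subseteq> {..m}" using assms by auto
  then show ?thesis using sq_in[of s "{..<s}"] assms by auto
qed

lemma inx_fwd: "s \<le> m \<Longrightarrow> inj_on nx {..<s}" by (auto simp: inj_on_def nx_def)

lemma fwd_good: assumes "s \<le> m"
  shows "snd (LH_state n M q jstar s) \<notin> fst (LH_state n M q jstar s) \<and>
     (\<exists>!B'. trop_basis n M q B' \<and>
        B' \<subseteq> insert (snd (LH_state n M q jstar s)) (fst (LH_state n M q jstar s)) \<and>
        B' \<noteq> fst (LH_state n M q jstar s))"
proof -
  have n1: "Inr (sq s) \<notin> BR (sq ` {..<s})" using sq_notin_lt[OF assms] by (auto simp: inr_BR)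
  have e1: "Inr (sq s) \<in> elems n" using sq_lt by (simp add: elems_def)
  have sub: "{..<s} \<subseteq> {..m}" using assms by auto
  have ij: "inj_on r (sq ` {..<s})" using inj_r_sq[OF sub inx_fwd[OF assms]] .
  note g = good_state[OF sq_img ij e1 n1]
  show ?thesis using g fwd[OF assms] by simp
qed

lemma fwd_nfl: assumes "1 \<le> s" "s \<le> m" shows "\<not> fully_labeled n (fst (LH_state n M q jstar s))"
proof -
  have "sq s = r (sq (s - 1))" using assms sq_Suc[of "s - 1"] by simp
  moreover have "sq (s - 1) \<in> sq ` {..<s}" using assms by auto
  ultimately have "sq s \<in> r ` sq ` {..<s}" by (metis imageI)
  moreover have "sq s \<notin> sq ` {..<s}" using sq_notin_lt assms by auto
  ultimately have "\<not> r ` sq ` {..<s} \<subseteq> sq ` {..<s}" by blast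
  then have "\<not> fully_labeled n (BR (sq ` {..<s}))" using fully_BR[OF sq_img] by simp
  then show ?thesis using fwd[OF assms(2)] by simp
qed

lemma t0_final: assumes "t = 0"
  shows "fst (LH_state n M q jstar (Suc m)) = BR (sq ` {..<Suc m})"
    and "r ` sq ` {..<Suc m} = sq ` {..<Suc m}"
proof -
  have "r (sq m) \<notin> r ` sq ` {..<m}"
  proof -
    have "r ` sq ` {..<m} = sq ` nx ` {..<m}" by (intro r_img) auto
    also have "nx ` {..<m} = Suc ` {..<m}" by (auto simp: nx_def)
    finally have e: "r ` sq ` {..<m} = sq ` Suc ` {..<m}" .
    have "Suc ` {..<m} \<subseteq> {..m}" by auto
    then have "sq 0 \<notin> sq ` Suc ` {..<m}" using sq_in[of 0 "Suc ` {..<m}"] by auto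
    then show ?thesis using e sq_Suc cyc assms by simp
  qed
  then have "LH_step n M q (BR (sq ` {..<m}), Inr (sq m)) = (BR (insert (sq m) (sq ` {..<m})), Inr (r (sq m)))"
    using sq_notin_lt[of m] by (intro step_F sq_img inj_r_sq inx_fwd sq_lt) auto
  then show "fst (LH_state n M q jstar (Suc m)) = BR (sq ` {..<Suc m})"
    using fwd[of m] by (simp add: LH_state_Suc lessThan_Suc)
  have "nx ` {..<Suc m} = {..<Suc m}"
  proof
    show "nx ` {..<Suc m} \<subseteq> {..<Suc m}" using nx_le by (auto simp: less_Suc_eq_le)
    show "{..<Suc m} \<subseteq> nx ` {..<Suc m}"
    proof
      fix x assume x: "x \<in> {..<Suc m}"
      show "x \<in> nx ` {..<Suc m}"
      proof (cases x)
        case 0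
        have "nx m = t" by (simp add: nx_def)
        then have "x = nx m" using assms 0 by simp
        then show ?thesis by blast
      next
        case (Suc y)
        then have "x = nx y" "y < Suc m" using x by (auto simp: nx_def)
        then show ?thesis by blast
      qed
    qed
  qed
  moreover have "{..<Suc m} \<subseteq> {..m}" by auto
  ultimately show "r ` sq ` {..<Suc m} = sq ` {..<Suc m}" using r_img[of "{..<Suc m}"] by simp
qed

definition Ab :: "nat \<Rightarrow> nat set" where "Ab u = {..<t - 1 - u} \<union> {t..m}"

lemma Ab_sub: "Ab u \<subseteq> {..m}" using tm by (auto simp: Ab_def)

lemma inx_bwd: "1 \<le> t \<Longrightarrow> inj_on nx (Ab u)"
  by (auto simp: inj_on_def nx_def Ab_def)

lemma bwd: assumes "1 \<le> t" shows "u \<le> t - 1 \<Longrightarrow> LH_state n M q jstar (Suc m + u) = (BR (sq ` Ab u), Inl (sq (t - 1 - u)))"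
proof (induction u)
  case 0
  have "LH_step n M q (BR (sq ` {..<m}), Inr (sq m)) = (BR (insert (sq m) (sq ` {..<m} - {sq (t - 1)})), Inl (sq (t - 1)))"
  proof (rule step_S)
    show "sq ` {..<m} \<subseteq> {..<n}" by (rule sq_img)
    show "inj_on r (sq ` {..<m})" by (intro inj_r_sq inx_fwd) auto
    show "sq m < n" by (rule sq_lt)
    show "sq m \<notin> sq ` {..<m}" using sq_notin_lt[of m] by auto
    show "sq (t - 1) \<in> sq ` {..<m}" using assms tm by auto
    show "r (sq m) = r (sq (t - 1))" using sq_Suc[of m] sq_Suc[of "t - 1"] cyc assms by simp
  qed
  moreover have "insert (sq m) (sq ` {..<m} - {sq (t - 1)}) = sq ` Ab 0"
  proof -
    have "sq ` {..<m} - {sq (t - 1)} = sq ` ({..<m} - {t - 1})" using tm by (intro sq_diff) auto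
    moreover have "insert m ({..<m} - {t - 1}) = Ab 0" using assms tm by (auto simp: Ab_def)
    ultimately show ?thesis by auto
  qed
  ultimately show ?case using fwd[of m] by (simp add: LH_state_Suc)
next
  case (Suc u)
  then have IH: "LH_state n M q jstar (Suc m + u) = (BR (sq ` Ab u), Inl (sq (t - 1 - u)))" by simp
  have e1: "Suc (t - 2 - u) = t - 1 - u" using Suc.prems by simp
  have jin: "t - 2 - u \<in> Ab u" using Suc.prems by (auto simp: Ab_def)
  have "Inl (sq (t - 1 - u)) = Inl (r (sq (t - 2 - u)))" using sq_Suc[of "t - 2 - u"] e1 by simp
  moreover have "LH_step n M q (BR (sq ` Ab u), Inl (r (sq (t - 2 - u)))) = (BR (sq ` Ab u - {sq (t - 2 - u)}), Inl (sq (t - 2 - u)))"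
    using jin by (intro step_Bk sq_img inj_r_sq Ab_sub inx_bwd assms) auto
  moreover have "sq ` Ab u - {sq (t - 2 - u)} = sq ` Ab (Suc u)"
  proof -
    have "sq ` Ab u - {sq (t - 2 - u)} = sq ` (Ab u - {t - 2 - u})" using jin Ab_sub by (intro sq_diff) auto
    moreover have "Ab u - {t - 2 - u} = Ab (Suc u)" using Suc.prems by (auto simp: Ab_def)
    ultimately show ?thesis by simp
  qed
  moreover have "t - 2 - u = t - 1 - Suc u" by simp
  ultimately show ?case using IH by (simp add: LH_state_Suc)
qed

end



context LH2 begin

lemma bwd_good: assumes t1: "1 \<le> t" and u: "u < t - 1"
  shows "snd (LH_state n M q jstar (Suc m + u)) \<notin> fst (LH_state n M q jstar (Suc m + u)) \<and>
     (\<exists>!B'. trop_basis n M q B' \<and>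
        B' \<subseteq> insert (snd (LH_state n M q jstar (Suc m + u))) (fst (LH_state n M q jstar (Suc m + u))) \<and>
        B' \<noteq> fst (LH_state n M q jstar (Suc m + u)))"
proof -
  have st: "LH_state n M q jstar (Suc m + u) = (BR (sq ` Ab u), Inl (sq (t - 1 - u)))"
    using bwd[OF t1, of u] u by simp
  have "Suc (t - 2 - u) = t - 1 - u" using u by simp
  then have "sq (t - 1 - u) = r (sq (t - 2 - u))" using sq_Suc[of "t - 2 - u"] by simp
  moreover have "t - 2 - u \<in> Ab u" using u by (auto simp: Ab_def)
  ultimately have "sq (t - 1 - u) \<in> r ` sq ` Ab u" by (metis imageI)
  then have n1: "Inl (sq (t - 1 - u)) \<notin> BR (sq ` Ab u)" by (simp add: inl_BR)
  have e1: "Inl (sq (t - 1 - u)) \<in> elems n" using sq_lt by (simp add: elems_def)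
  have ij: "inj_on r (sq ` Ab u)" using inj_r_sq[OF Ab_sub inx_bwd[OF t1]] .
  note g = good_state[OF sq_img ij e1 n1]
  show ?thesis using g st by simp
qed

lemma bwd_nfl: assumes t1: "1 \<le> t" and u: "u < t - 1"
  shows "\<not> fully_labeled n (fst (LH_state n M q jstar (Suc m + u)))"
proof -
  have st: "LH_state n M q jstar (Suc m + u) = (BR (sq ` Ab u), Inl (sq (t - 1 - u)))"
    using bwd[OF t1, of u] u by simp
  have "Suc (t - 2 - u) = t - 1 - u" using u by simp
  then have "sq (t - 1 - u) = r (sq (t - 2 - u))" using sq_Suc[of "t - 2 - u"] by simp
  moreover have "t - 2 - u \<in> Ab u" using u by (auto simp: Ab_def)
  ultimately have a: "sq (t - 1 - u) \<in> r ` sq ` Ab u" by (metis imageI)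
  have "t - 1 - u \<notin> Ab u" "t - 1 - u \<le> m" using u tm by (auto simp: Ab_def)
  then have "sq (t - 1 - u) \<notin> sq ` Ab u" using sq_in[OF _ Ab_sub, of "t - 1 - u" u] by simp
  with a have "\<not> r ` sq ` Ab u \<subseteq> sq ` Ab u" by blast
  then have "\<not> fully_labeled n (BR (sq ` Ab u))" using fully_BR[OF sq_img] by simp
  then show ?thesis using st by simp
qed

lemma bwd_final: assumes t1: "1 \<le> t"
  shows "fst (LH_state n M q jstar (Suc m + (t - 1))) = BR (sq ` {t..m})"
    and "r ` sq ` {t..m} = sq ` {t..m}"
proof -
  have "Ab (t - 1) = {t..m}" by (simp add: Ab_def)
  then show "fst (LH_state n M q jstar (Suc m + (t - 1))) = BR (sq ` {t..m})"
    using bwd[OF t1, of "t - 1"] by simp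
  have "nx ` {t..m} = {t..m}"
  proof
    show "nx ` {t..m} \<subseteq> {t..m}" using tm by (auto simp: nx_def)
    show "{t..m} \<subseteq> nx ` {t..m}"
    proof
      fix x assume x: "x \<in> {t..m}"
      show "x \<in> nx ` {t..m}"
      proof (cases "x = t")
        case True
        have "nx m = t" by (simp add: nx_def)
        then show ?thesis using True tm by force
      next
        case False
        then have "x = nx (x - 1)" "x - 1 \<in> {t..m}" using x by (auto simp: nx_def)
        then show ?thesis by blast
      qed
    qed
  qed
  moreover have "{t..m} \<subseteq> {..m}" by auto
  ultimately show "r ` sq ` {t..m} = sq ` {t..m}" using r_img[of "{t..m}"] by simp
qed

lemma result: "\<exists>k. 1 \<le> k \<and> k \<le> 2 * n - 1 \<and>
     (\<forall>m<k. snd (LH_state n M q jstar m) \<notin> fst (LH_state n M q jstar m) \<and>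
            (\<exists>!B'. trop_basis n M q B' \<and>
                   B' \<subseteq> insert (snd (LH_state n M q jstar m)) (fst (LH_state n M q jstar m)) \<and>
                   B' \<noteq> fst (LH_state n M q jstar m))) \<and>
     (\<forall>m. 1 \<le> m \<and> m < k \<longrightarrow> \<not> fully_labeled n (fst (LH_state n M q jstar m))) \<and>
     fully_labeled n (fst (LH_state n M q jstar k)) \<and>
     TNECP_sol n M q (\<lambda>i. basic_point n M q (fst (LH_state n M q jstar k)) (Inl i))
                     (\<lambda>i. basic_point n M q (fst (LH_state n M q jstar k)) (Inr i))"
proof (cases "t = 0")
  case True
  note f = t0_final[OF True]
  have R: "sq ` {..<Suc m} \<subseteq> {..<n}" by (rule sq_img)
  have ne: "sq ` {..<Suc m} \<noteq> {}" by auto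
  show ?thesis
  proof (intro exI[of _ "Suc m"] conjI allI impI)
    show "1 \<le> Suc m" by simp
    show "Suc m \<le> 2 * n - 1" using mn by simp
    fix m' assume "m' < Suc m"
    then have "m' \<le> m" by simp
    note h = fwd_good[OF this]
    from h show "snd (LH_state n M q jstar m') \<notin> fst (LH_state n M q jstar m')"
      "\<exists>!B'. trop_basis n M q B' \<and>
                   B' \<subseteq> insert (snd (LH_state n M q jstar m')) (fst (LH_state n M q jstar m')) \<and>
                   B' \<noteq> fst (LH_state n M q jstar m')"
      by (rule conjunct1, rule conjunct2)
  next
    fix m' assume "1 \<le> m' \<and> m' < Suc m"
    then show "\<not> fully_labeled n (fst (LH_state n M q jstar m'))" using fwd_nfl[of m'] by auto
  next
    show "fully_labeled n (fst (LH_state n M q jstar (Suc m)))" using f fully_BR[OF R] by simp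
    show "TNECP_sol n M q (\<lambda>i. basic_point n M q (fst (LH_state n M q jstar (Suc m))) (Inl i))
                     (\<lambda>i. basic_point n M q (fst (LH_state n M q jstar (Suc m))) (Inr i))"
      using f TNECP_BR[OF R f(2) ne] by simp
  qed
next
  case False
  then have t1: "1 \<le> t" by simp
  note f = bwd_final[OF t1]
  have R: "sq ` {t..m} \<subseteq> {..<n}" by (rule sq_img)
  have ne: "sq ` {t..m} \<noteq> {}" using tm by auto
  show ?thesis
  proof (intro exI[of _ "Suc m + (t - 1)"] conjI allI impI)
    show "1 \<le> Suc m + (t - 1)" by simp
    show "Suc m + (t - 1) \<le> 2 * n - 1" using mn tm by simp
    fix m' assume m': "m' < Suc m + (t - 1)"
    have "snd (LH_state n M q jstar m') \<notin> fst (LH_state n M q jstar m') \<and>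
         (\<exists>!B'. trop_basis n M q B' \<and>
                   B' \<subseteq> insert (snd (LH_state n M q jstar m')) (fst (LH_state n M q jstar m')) \<and>
                   B' \<noteq> fst (LH_state n M q jstar m'))"
    proof (cases "m' \<le> m")
      case True
      then show ?thesis by (rule fwd_good)
    next
      case False
      define u where "u = m' - Suc m"
      have mu: "m' = Suc m + u" "u < t - 1" using m' False unfolding u_def by arith+
      show ?thesis unfolding mu(1) by (rule bwd_good[OF t1 mu(2)])
    qed
    then show "snd (LH_state n M q jstar m') \<notin> fst (LH_state n M q jstar m')"
      "\<exists>!B'. trop_basis n M q B' \<and>
                   B' \<subseteq> insert (snd (LH_state n M q jstar m')) (fst (LH_state n M q jstar m')) \<and>
                   B' \<noteq> fst (LH_state n M q jstar m')" by (rule conjunct1, rule conjunct2)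
  next
    fix m' assume m': "1 \<le> m' \<and> m' < Suc m + (t - 1)"
    show "\<not> fully_labeled n (fst (LH_state n M q jstar m'))"
    proof (cases "m' \<le> m")
      case True
      then show ?thesis using fwd_nfl m' by blast
    next
      case False
      define u where "u = m' - Suc m"
      have mu: "m' = Suc m + u" "u < t - 1" using m' False unfolding u_def by arith+
      show ?thesis unfolding mu(1) by (rule bwd_nfl[OF t1 mu(2)])
    qed
  next
    show "fully_labeled n (fst (LH_state n M q jstar (Suc m + (t - 1))))" using f fully_BR[OF R] by simp
    show "TNECP_sol n M q (\<lambda>i. basic_point n M q (fst (LH_state n M q jstar (Suc m + (t - 1)))) (Inl i))
                     (\<lambda>i. basic_point n M q (fst (LH_state n M q jstar (Suc m + (t - 1)))) (Inr i))"
      using f TNECP_BR[OF R f(2) ne] by simp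
  qed
qed

end

theorem theorem1p3:
  fixes n :: nat and M :: "nat \<Rightarrow> nat \<Rightarrow> ereal" and q :: "nat \<Rightarrow> real" and jstar :: nat
  assumes M_trop: "\<forall>i<n. \<forall>j<n. M i j \<noteq> \<infinity>"
    and M_col: "\<forall>j<n. \<exists>k<n. M k j \<noteq> -\<infinity>"
    and nondeg: "nondegenerate n M q"
    and jstar: "jstar < n"
  shows "\<exists>k. 1 \<le> k \<and> k \<le> 2 * n - 1 \<and>
     (\<forall>m<k. snd (LH_state n M q jstar m) \<notin> fst (LH_state n M q jstar m) \<and>
            (\<exists>!B'. trop_basis n M q B' \<and>
                   B' \<subseteq> insert (snd (LH_state n M q jstar m)) (fst (LH_state n M q jstar m)) \<and>
                   B' \<noteq> fst (LH_state n M q jstar m))) \<and>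
     (\<forall>m. 1 \<le> m \<and> m < k \<longrightarrow> \<not> fully_labeled n (fst (LH_state n M q jstar m))) \<and>
     fully_labeled n (fst (LH_state n M q jstar k)) \<and>
     TNECP_sol n M q (\<lambda>i. basic_point n M q (fst (LH_state n M q jstar k)) (Inl i))
                     (\<lambda>i. basic_point n M q (fst (LH_state n M q jstar k)) (Inr i))"
proof -
  interpret L: LH n M q jstar using assms by unfold_locales
  obtain m t where mt: "m < n" "t \<le> m" "inj_on L.sq {..m}" "L.sq (Suc m) = L.sq t"
    using L.cycle_exists by blast
  interpret L2: LH2 n M q jstar m t using mt by unfold_locales
  show ?thesis by (rule L2.result)
qed


end
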